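(* Let $N$ be finite, $\mathbf P$ stochastic on $N$, $0<\beta<1$, $\mathbf R\in\mathbb R^N$, $S\subseteq N$ and $j\in S^c$. Then $a^S_{jj}\neq 0$, and with $T=S^c\setminus\{j\}$: $$\mathbf A^{S\cup\{j\}}_{T,S}=\mathbf A^S_{T,S}-\frac{\mathbf A^S_{T,j}\mathbf A^S_{j,S}}{a^S_{jj}},\qquad \mathbf A^{S\cup\{j\}}_{T,j}=\frac{\mathbf A^S_{T,j}}{a^S_{jj}},$$ $$\mathbf w^{S\cup\{j\}}_S=\mathbf w^S_S+\frac{w^S_j}{a^S_{jj}}\mathbf A^S_{S,j},\qquad w^{S\cup\{j\}}_j=\frac{w^S_j}{a^S_{jj}},\qquad \mathbf w^{S\cup\{j\}}_T=\mathbf w^S_T-\frac{w^S_j}{a^S_{jj}}\mathbf A^S_{T,j},$$ and the same three identities hold with $\mathbf w$ replaced by $\mathbf r$ throughout.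
   Context: $N$ finite, $\mathbf P=(p_{ij})$ stochastic, $\beta\in(0,1)$, $\mathbf R=(R_j)$; submatrices such as $\mathbf A^S_{T,S}$ use row set $T$ and column set $S$, and $a^S_{ij}$ are the entries of $\mathbf A^S$; $S^c=N\setminus S$. Define $$\mathbf P^S=\begin{bmatrix}\mathbf P_{SS}&\mathbf P_{SS^c}\\\mathbf 0&\mathbf I_{S^c}\end{bmatrix},\ \mathbf P^{S^c}=\begin{bmatrix}\mathbf I_S&\mathbf 0\\\mathbf P_{S^cS}&\mathbf P_{S^cS^c}\end{bmatrix},\ \mathbf A^S=(\mathbf I-\beta\mathbf P^{S^c})(\mathbf I-\beta\mathbf P^S)^{-1}.$$ With $X(t)$ the Markov chain with matrix $\mathbf P$, $\mathsf E_i$ expectation given $X(0)=i$, and $\tau_S=\min\{t\ge0:X(t)\notin S\}$: $f_i^S=\mathsf{E}_i[\sum_{t=0}^{\tau_S-1}R_{X(t)}\beta^t]$, $g_i^S=\mathsf{E}_i[\sum_{t=0}^{\tau_S-1}\beta^t]$, $w_i^S=1+\beta\sum_kp_{ik}g_k^S-\beta g_i^S$, $r_i^S=R_i+\beta\sum_kp_{ik}f_k^S-\beta f_i^S$; $\mathbf w^S,\mathbf r^S$ are the column vectors of these, and subscripts denote sub-vectors. *)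

theory Defs
  imports "HOL-Analysis.Analysis"
begin

text \<open>The finite state space N is the finite type 'n (N = UNIV).
  Matrices are real^'n^'n, vectors are functions 'n \<Rightarrow> real.\<close>

definition stochastic :: "real^'n^'n \<Rightarrow> bool" where
  "stochastic P \<longleftrightarrow> (\<forall>i k. P $ i $ k \<ge> 0) \<and> (\<forall>i. (\<Sum>k\<in>UNIV. P $ i $ k) = 1)"

definition PS :: "real^'n^'n \<Rightarrow> 'n set \<Rightarrow> real^'n^'n" where
  "PS P S = (\<chi> i k. if i \<in> S then P $ i $ k else (if i = k then 1 else 0))"

definition AS :: "real^'n^'n \<Rightarrow> real \<Rightarrow> 'n set \<Rightarrow> real^'n^'n" where
  "AS P \<beta> S = (mat 1 - \<beta> *\<^sub>R PS P (- S)) ** matrix_inv (mat 1 - \<beta> *\<^sub>R PS P S)"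

text \<open>Trajectories X(0..t) = xs (length t+1) starting at i and staying in S
  up to time t (i.e. t < tau_S), with their probability under P.\<close>
definition paths_in :: "'n set \<Rightarrow> 'n \<Rightarrow> nat \<Rightarrow> 'n list set" where
  "paths_in S i t = {xs. length xs = Suc t \<and> xs ! 0 = i \<and> set xs \<subseteq> S}"

definition path_prob :: "real^'n^'n \<Rightarrow> 'n list \<Rightarrow> real" where
  "path_prob P xs = (\<Prod>k<length xs - 1. P $ (xs ! k) $ (xs ! Suc k))"

text \<open>f^S_i = E_i[ sum_{t<tau_S} R_{X(t)} beta^t ], written out via linearity as
  sum_t beta^t E_i[R_{X(t)} 1{t < tau_S}].\<close>
definition fS :: "real^'n^'n \<Rightarrow> real \<Rightarrow> ('n \<Rightarrow> real) \<Rightarrow> 'n set \<Rightarrow> 'n \<Rightarrow> real" where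
  "fS P \<beta> R S i = (\<Sum>t. \<beta> ^ t * (\<Sum>xs\<in>paths_in S i t. path_prob P xs * R (xs ! t)))"

definition gS :: "real^'n^'n \<Rightarrow> real \<Rightarrow> 'n set \<Rightarrow> 'n \<Rightarrow> real" where
  "gS P \<beta> S i = fS P \<beta> (\<lambda>_. 1) S i"

definition wS :: "real^'n^'n \<Rightarrow> real \<Rightarrow> 'n set \<Rightarrow> 'n \<Rightarrow> real" where
  "wS P \<beta> S i = 1 + \<beta> * (\<Sum>k\<in>UNIV. P $ i $ k * gS P \<beta> S k) - \<beta> * gS P \<beta> S i"

definition rS :: "real^'n^'n \<Rightarrow> real \<Rightarrow> ('n \<Rightarrow> real) \<Rightarrow> 'n set \<Rightarrow> 'n \<Rightarrow> real" where
  "rS P \<beta> R S i = R i + \<beta> * (\<Sum>k\<in>UNIV. P $ i $ k * fS P \<beta> R S k) - \<beta> * fS P \<beta> R S i"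

end

theory Submission imports Defs begin

definition Phi :: "real^'n^'n \<Rightarrow> real \<Rightarrow> 'n set \<Rightarrow> ('n \<Rightarrow> real) \<Rightarrow> 'n \<Rightarrow> real" where
  "Phi P \<beta> S x i = (if i \<in> S then x i - \<beta> * (\<Sum>l\<in>UNIV. P$i$l * x l) else (1-\<beta>) * x i)"

lemma Phi_lin: "Phi P \<beta> S (\<lambda>l. a * x l + b * y l) i = a * Phi P \<beta> S x i + b * Phi P \<beta> S y i"
  by (simp add: Phi_def algebra_simps sum.distrib sum_distrib_left)

lemma sdelta: "(\<Sum>l\<in>(UNIV::'n::finite set). (f l::real) * (if i = l then 1 else 0)) = f i"
proof -
  have "(\<Sum>l\<in>UNIV. f l * (if i = l then 1 else 0)) = (\<Sum>l\<in>UNIV. if i = l then f l else 0)"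
    by (rule sum.cong) auto
  then show ?thesis by simp
qed

lemma MX: "((mat 1 - \<beta> *\<^sub>R PS P S) ** X)$i$k = Phi P \<beta> S (\<lambda>l. X$l$k) i"
proof -
  have "((mat 1 - \<beta> *\<^sub>R PS P S) ** X)$i$k = (\<Sum>l\<in>UNIV. ((if i = l then 1 else 0) - \<beta> * (PS P S)$i$l) * X$l$k)"
    by (simp add: matrix_matrix_mult_def mat_def)
  also have "\<dots> = X$i$k - \<beta> * (\<Sum>l\<in>UNIV. (PS P S)$i$l * X$l$k)"
    by (simp add: left_diff_distrib sum_subtractf sum_distrib_left mult.assoc if_distrib[of "\<lambda>u. u * _"] sum.delta cong: if_cong)
  also have "\<dots> = Phi P \<beta> S (\<lambda>l. X$l$k) i"
    by (cases "i \<in> S") (simp_all add: Phi_def PS_def if_distrib[of "\<lambda>u. u * _"] sum.delta sdelta algebra_simps cong: if_cong)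
  finally show ?thesis .
qed

lemma Mv: "((mat 1 - \<beta> *\<^sub>R PS P S) *v x)$i = Phi P \<beta> S (\<lambda>l. x$l) i"
proof -
  have "((mat 1 - \<beta> *\<^sub>R PS P S) *v x)$i = (\<Sum>l\<in>UNIV. ((if i = l then 1 else 0) - \<beta> * (PS P S)$i$l) * x$l)"
    by (simp add: matrix_vector_mult_def mat_def)
  also have "\<dots> = x$i - \<beta> * (\<Sum>l\<in>UNIV. (PS P S)$i$l * x$l)"
    by (simp add: left_diff_distrib sum_subtractf sum_distrib_left mult.assoc if_distrib[of "\<lambda>u. u * _"] sum.delta cong: if_cong)
  also have "\<dots> = Phi P \<beta> S (\<lambda>l. x$l) i"
    by (cases "i \<in> S") (simp_all add: Phi_def PS_def if_distrib[of "\<lambda>u. u * _"] sum.delta sdelta algebra_simps cong: if_cong)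
  finally show ?thesis .
qed

lemma Phi_zero:
  assumes st: "stochastic P" and b0: "0 \<le> \<beta>" and b1: "\<beta> < 1"
    and z: "\<And>i. Phi P \<beta> S z i = 0"
  shows "z = (\<lambda>_. 0)"
proof -
  define m where "m = Max (range (\<lambda>i. \<bar>z i\<bar>))"
  have mge: "\<bar>z k\<bar> \<le> m" for k unfolding m_def by (rule Max_ge) auto
  have "m \<in> range (\<lambda>i. \<bar>z i\<bar>)" unfolding m_def by (rule Max_in) auto
  then obtain i0 where i0: "\<bar>z i0\<bar> = m" by auto
  have "m \<le> 0"
  proof (cases "i0 \<in> S")
    case True
    with z[of i0] have e: "z i0 = \<beta> * (\<Sum>l\<in>UNIV. P$i0$l * z l)" by (simp add: Phi_def)
    have "\<bar>\<Sum>l\<in>UNIV. P$i0$l * z l\<bar> \<le> (\<Sum>l\<in>UNIV. P$i0$l * m)"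
    proof -
      have "\<bar>\<Sum>l\<in>UNIV. P$i0$l * z l\<bar> \<le> (\<Sum>l\<in>UNIV. \<bar>P$i0$l * z l\<bar>)" by (rule sum_abs)
      also have "\<dots> \<le> (\<Sum>l\<in>UNIV. P$i0$l * m)"
        apply (rule sum_mono)
        using st mge unfolding stochastic_def by (simp add: abs_mult mult_left_mono)
      finally show ?thesis .
    qed
    also have "\<dots> = m" using st unfolding stochastic_def by (simp add: sum_distrib_right[symmetric])
    finally have le: "\<bar>\<Sum>l\<in>UNIV. P$i0$l * z l\<bar> \<le> m" .
    have "m = \<beta> * \<bar>\<Sum>l\<in>UNIV. P$i0$l * z l\<bar>" using e i0 b0 by (simp add: abs_mult)
    also have "\<dots> \<le> \<beta> * m" using le b0 by (rule mult_left_mono)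
    finally have "m \<le> \<beta> * m" .
    then show ?thesis using b1 by (metis mult_le_cancel_right1 not_less) 
  next
    case False
    with z[of i0] b1 have "z i0 = 0" by (simp add: Phi_def)
    then show ?thesis using i0 by simp
  qed
  then show ?thesis using mge by (auto intro!: ext) (metis abs_le_zero_iff order.trans)
qed

lemma Phi_inj:
  assumes st: "stochastic P" and b0: "0 \<le> \<beta>" and b1: "\<beta> < 1"
    and z: "\<And>i. Phi P \<beta> S x i = Phi P \<beta> S y i"
  shows "x = y"
proof -
  have "(\<lambda>l. x l - y l) = (\<lambda>_. 0)"
  proof (rule Phi_zero[OF st b0 b1])
    fix i
    have "Phi P \<beta> S (\<lambda>l. 1 * x l + (-1) * y l) i = 0" using z[of i] by (simp only: Phi_lin)
    then show "Phi P \<beta> S (\<lambda>l. x l - y l) i = 0" by simp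
  qed
  then show ?thesis by (auto simp: fun_eq_iff dest: fun_cong)
qed

lemma M_invertible:
  assumes st: "stochastic P" and b0: "0 \<le> \<beta>" and b1: "\<beta> < 1"
  shows "invertible (mat 1 - \<beta> *\<^sub>R PS P S)"
proof -
  have "inj ((*v) (mat 1 - \<beta> *\<^sub>R PS P S))"
  proof (rule injI)
    fix x y assume "(mat 1 - \<beta> *\<^sub>R PS P S) *v x = (mat 1 - \<beta> *\<^sub>R PS P S) *v y"
    then have "\<And>i. Phi P \<beta> S (\<lambda>l. x$l) i = Phi P \<beta> S (\<lambda>l. y$l) i" by (metis Mv)
    from Phi_inj[OF st b0 b1 this] show "x = y" by (simp add: vec_eq_iff fun_eq_iff)
  qed
  then show ?thesis by (simp add: invertible_left_inverse matrix_left_invertible_injective)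
qed

lemma minv:
  assumes "invertible M"
  shows "M ** matrix_inv M = mat 1 \<and> matrix_inv M ** M = mat 1"
  using assms unfolding invertible_def matrix_inv_def by (rule someI_ex)


definition vt :: "real^'n^'n \<Rightarrow> ('n \<Rightarrow> real) \<Rightarrow> 'n set \<Rightarrow> nat \<Rightarrow> 'n \<Rightarrow> real" where
  "vt P R S t i = (\<Sum>xs\<in>paths_in S i t. path_prob P xs * R (xs ! t))"

lemma paths_fin: "finite (paths_in S (i::'n::finite) t)"
proof (rule finite_subset)
  show "paths_in S i t \<subseteq> {xs. set xs \<subseteq> UNIV \<and> length xs = Suc t}" by (auto simp: paths_in_def)
  show "finite {xs. set xs \<subseteq> (UNIV::'n set) \<and> length xs = Suc t}" by (rule finite_lists_length_eq) simp
qed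

lemma paths_out: "i \<notin> S \<Longrightarrow> paths_in S i t = {}"
  unfolding paths_in_def by auto (metis nth_mem subsetD zero_less_Suc)

lemma paths_0: "i \<in> S \<Longrightarrow> paths_in S i 0 = {[i]}"
  unfolding paths_in_def by (auto simp: length_Suc_conv)

lemma paths_Suc: "i \<in> S \<Longrightarrow> paths_in S i (Suc t) = (\<lambda>ys. i # ys) ` (\<Union>k. paths_in S k t)"
proof
  assume "i \<in> S"
  show "paths_in S i (Suc t) \<subseteq> (\<lambda>ys. i # ys) ` (\<Union>k. paths_in S k t)"
  proof
    fix xs assume "xs \<in> paths_in S i (Suc t)"
    then obtain y ys where xs: "xs = i # ys" "length ys = Suc t" "set ys \<subseteq> S"
      unfolding paths_in_def by (cases xs) auto
    then have "ys \<in> paths_in S (ys!0) t" unfolding paths_in_def by auto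
    then show "xs \<in> (\<lambda>ys. i # ys) ` (\<Union>k. paths_in S k t)" using xs by blast
  qed
  show "(\<lambda>ys. i # ys) ` (\<Union>k. paths_in S k t) \<subseteq> paths_in S i (Suc t)"
    using \<open>i \<in> S\<close> unfolding paths_in_def by auto
qed

lemma path_prob_Cons: "length ys = Suc t \<Longrightarrow> path_prob P (i # ys) = P$i$(ys!0) * path_prob P ys"
  unfolding path_prob_def by (simp add: prod.lessThan_Suc_shift del: prod.lessThan_Suc)

lemma vt0: "vt P R S 0 i = (if i \<in> S then R i else 0)"
  by (simp add: vt_def paths_0 paths_out path_prob_def)

lemma vt_out: "i \<notin> S \<Longrightarrow> vt P R S t i = 0"
  by (simp add: vt_def paths_out)

lemma vtSuc:
  assumes "i \<in> S"
  shows "vt P R S (Suc t) i = (\<Sum>k\<in>UNIV. P$i$k * vt P R S t k)"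
proof -
  have "vt P R S (Suc t) i = (\<Sum>ys\<in>(\<Union>k. paths_in S k t). path_prob P (i#ys) * R ((i#ys) ! Suc t))"
    unfolding vt_def paths_Suc[OF assms] by (subst sum.reindex) (auto simp: inj_on_def)
  also have "\<dots> = (\<Sum>k\<in>UNIV. \<Sum>ys\<in>paths_in S k t. path_prob P (i#ys) * R ((i#ys) ! Suc t))"
    by (rule sum.UNION_disjoint) (simp_all add: paths_fin, auto simp: paths_in_def)
  also have "\<dots> = (\<Sum>k\<in>UNIV. P$i$k * vt P R S t k)"
    unfolding vt_def sum_distrib_left
    by (intro sum.cong refl) (auto simp: paths_in_def path_prob_Cons)
  finally show ?thesis .
qed

lemma vt_bound:
  assumes st: "stochastic P"
  shows "\<bar>vt P R S t i\<bar> \<le> (\<Sum>k\<in>UNIV. \<bar>R k\<bar>)"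
proof (induction t arbitrary: i)
  case 0
  have "\<bar>R i\<bar> \<le> (\<Sum>k\<in>UNIV. \<bar>R k\<bar>)" by (rule member_le_sum) auto
  then show ?case by (simp add: vt0 sum_nonneg)
next
  case (Suc t)
  show ?case
  proof (cases "i \<in> S")
    case True
    have "\<bar>\<Sum>k\<in>UNIV. P$i$k * vt P R S t k\<bar> \<le> (\<Sum>k\<in>UNIV. \<bar>P$i$k * vt P R S t k\<bar>)" by (rule sum_abs)
    also have "\<dots> \<le> (\<Sum>k\<in>UNIV. P$i$k * (\<Sum>k\<in>UNIV. \<bar>R k\<bar>))"
      apply (rule sum_mono)
      using st Suc.IH unfolding stochastic_def by (simp add: abs_mult mult_left_mono)
    also have "\<dots> = (\<Sum>k\<in>UNIV. \<bar>R k\<bar>)" using st unfolding stochastic_def by (simp add: sum_distrib_right[symmetric])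
    finally show ?thesis using True by (simp add: vtSuc)
  next
    case False then show ?thesis by (simp add: vt_out sum_nonneg)
  qed
qed

lemma vt_summable:
  assumes st: "stochastic P" and b0: "0 \<le> \<beta>" and b1: "\<beta> < 1"
  shows "summable (\<lambda>t. \<beta>^t * vt P R S t i)"
proof (rule summable_comparison_test')
  show "summable (\<lambda>t. (\<Sum>k\<in>UNIV. \<bar>R k\<bar>) * \<beta>^t)"
    using b0 b1 by (intro summable_mult summable_geometric) simp
  fix t :: nat
  show "norm (\<beta>^t * vt P R S t i) \<le> (\<Sum>k\<in>UNIV. \<bar>R k\<bar>) * \<beta>^t"
    using vt_bound[OF st, of R S t i] b0 by (simp add: abs_mult mult.commute mult_left_mono)
qed

lemma fS_vt: "fS P \<beta> R S i = (\<Sum>t. \<beta>^t * vt P R S t i)"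
  by (simp add: fS_def vt_def)

lemma fS_fix:
  assumes st: "stochastic P" and b0: "0 \<le> \<beta>" and b1: "\<beta> < 1"
  shows "fS P \<beta> R S i = (if i \<in> S then R i + \<beta> * (\<Sum>k\<in>UNIV. P$i$k * fS P \<beta> R S k) else 0)"
proof (cases "i \<in> S")
  case True
  note sm = vt_summable[OF st b0 b1]
  have "(\<Sum>t. \<beta>^Suc t * vt P R S (Suc t) i) = fS P \<beta> R S i - vt P R S 0 i"
    unfolding fS_vt using suminf_split_head[OF sm[of R S i]] by simp
  moreover have "(\<Sum>t. \<beta>^Suc t * vt P R S (Suc t) i) = (\<Sum>t. \<beta> * (\<Sum>k\<in>UNIV. P$i$k * (\<beta>^t * vt P R S t k)))"
    using True by (simp add: vtSuc sum_distrib_left algebra_simps)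
  moreover have "\<dots> = \<beta> * (\<Sum>t. (\<Sum>k\<in>UNIV. P$i$k * (\<beta>^t * vt P R S t k)))"
    by (rule suminf_mult) (intro summable_sum summable_mult sm)
  moreover have "(\<Sum>t. (\<Sum>k\<in>UNIV. P$i$k * (\<beta>^t * vt P R S t k))) = (\<Sum>k\<in>UNIV. \<Sum>t. P$i$k * (\<beta>^t * vt P R S t k))"
    by (rule suminf_sum) (intro summable_mult sm)
  moreover have "\<dots> = (\<Sum>k\<in>UNIV. P$i$k * fS P \<beta> R S k)"
    unfolding fS_vt by (intro sum.cong refl suminf_mult sm)
  ultimately show ?thesis using True by (simp add: vt0)
next
  case False
  then show ?thesis by (simp add: fS_vt vt_out)
qed


lemma Phi_scale: "Phi P \<beta> S (\<lambda>l. a * x l) i = a * Phi P \<beta> S x i"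
  by (simp add: Phi_def algebra_simps sum_distrib_left)

lemma Phi_0: "Phi P \<beta> S (\<lambda>l. 0) i = 0"
  by (simp add: Phi_def)

lemma Phi_ins: "i \<noteq> j \<Longrightarrow> Phi P \<beta> (insert j S) x i = Phi P \<beta> S x i"
  by (simp add: Phi_def)

lemma colM:
  assumes st: "stochastic P" and b0: "0 \<le> \<beta>" and b1: "\<beta> < 1"
  shows "Phi P \<beta> S (\<lambda>l. matrix_inv (mat 1 - \<beta> *\<^sub>R PS P S) $l$k) i = (if i = k then 1 else 0)"
proof -
  have "(mat 1 - \<beta> *\<^sub>R PS P S) ** matrix_inv (mat 1 - \<beta> *\<^sub>R PS P S) = mat 1"
    using minv[OF M_invertible[OF st b0 b1]] by blast
  then have "((mat 1 - \<beta> *\<^sub>R PS P S) ** matrix_inv (mat 1 - \<beta> *\<^sub>R PS P S))$i$k = (if i = k then 1 else 0)"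
    by (simp add: mat_def)
  then show ?thesis by (simp only: MX)
qed

lemma Aent: "AS P \<beta> S $i$k = Phi P \<beta> (-S) (\<lambda>l. matrix_inv (mat 1 - \<beta> *\<^sub>R PS P S) $l$k) i"
  unfolding AS_def by (rule MX)

lemma fPhi:
  assumes st: "stochastic P" and b0: "0 \<le> \<beta>" and b1: "\<beta> < 1"
  shows "Phi P \<beta> S (fS P \<beta> R S) i = (if i \<in> S then R i else 0)"
  using fS_fix[OF st b0 b1, of R S i] fS_fix[OF st b0 b1, of R S]
  by (auto simp: Phi_def)

theorem mainTheorem9:
  fixes P :: "real^'n^'n" and \<beta> :: real and R :: "'n \<Rightarrow> real"
    and S :: "'n set" and j :: 'n
  assumes "stochastic P" and "0 < \<beta>" and "\<beta> < 1" and "j \<notin> S"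
  defines "A \<equiv> AS P \<beta> S" and "A' \<equiv> AS P \<beta> (insert j S)"
    and "T \<equiv> - S - {j}"
  shows "A $ j $ j \<noteq> 0
    \<and> (\<forall>i\<in>T. \<forall>k\<in>S. A' $ i $ k = A $ i $ k - A $ i $ j * A $ j $ k / A $ j $ j)
    \<and> (\<forall>i\<in>T. A' $ i $ j = A $ i $ j / A $ j $ j)
    \<and> (\<forall>i\<in>S. wS P \<beta> (insert j S) i = wS P \<beta> S i + wS P \<beta> S j / A $ j $ j * A $ i $ j)
    \<and> wS P \<beta> (insert j S) j = wS P \<beta> S j / A $ j $ j
    \<and> (\<forall>i\<in>T. wS P \<beta> (insert j S) i = wS P \<beta> S i - wS P \<beta> S j / A $ j $ j * A $ i $ j)
    \<and> (\<forall>i\<in>S. rS P \<beta> R (insert j S) i = rS P \<beta> R S i + rS P \<beta> R S j / A $ j $ j * A $ i $ j)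
    \<and> rS P \<beta> R (insert j S) j = rS P \<beta> R S j / A $ j $ j
    \<and> (\<forall>i\<in>T. rS P \<beta> R (insert j S) i = rS P \<beta> R S i - rS P \<beta> R S j / A $ j $ j * A $ i $ j)"
proof -
  note st = assms(1)
  have b0: "0 \<le> \<beta>" using assms(2) by simp
  note b1 = assms(3)
  note jS = assms(4)
  define Mi where "Mi = matrix_inv (mat 1 - \<beta> *\<^sub>R PS P S)"
  define Mi' where "Mi' = matrix_inv (mat 1 - \<beta> *\<^sub>R PS P (insert j S))"
  have cM: "\<And>k i. Phi P \<beta> S (\<lambda>l. Mi$l$k) i = (if i = k then 1 else 0)"
    unfolding Mi_def by (rule colM[OF st b0 b1])
  have cM': "\<And>k i. Phi P \<beta> (insert j S) (\<lambda>l. Mi'$l$k) i = (if i = k then 1 else 0)"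
    unfolding Mi'_def by (rule colM[OF st b0 b1])
  have Ae: "\<And>i k. A$i$k = Phi P \<beta> (-S) (\<lambda>l. Mi$l$k) i"
    unfolding A_def Mi_def by (rule Aent)
  have Ae': "\<And>i k. A'$i$k = Phi P \<beta> (-(insert j S)) (\<lambda>l. Mi'$l$k) i"
    unfolding A'_def Mi'_def by (rule Aent)
  have PhiNj: "\<And>x. Phi P \<beta> (-S) x j = Phi P \<beta> (insert j S) x j"
    using jS by (simp add: Phi_def)
  have PhiT: "\<And>x i. i \<in> T \<Longrightarrow> Phi P \<beta> (-(insert j S)) x i = Phi P \<beta> (-S) x i"
    unfolding T_def by (simp add: Phi_def)
  define a where "a = A$j$j"
  have ajj: "a = Phi P \<beta> (insert j S) (\<lambda>l. Mi$l$j) j" unfolding a_def Ae PhiNj ..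
  have a0: "a \<noteq> 0"
  proof
    assume "a = 0"
    have "\<And>i. Phi P \<beta> (insert j S) (\<lambda>l. Mi$l$j) i = Phi P \<beta> (insert j S) (\<lambda>l. 0) i"
    proof -
      fix i show "Phi P \<beta> (insert j S) (\<lambda>l. Mi$l$j) i = Phi P \<beta> (insert j S) (\<lambda>l. 0) i"
        using \<open>a = 0\<close> ajj cM[of j i] by (cases "i = j") (simp_all add: Phi_0 Phi_ins)
    qed
    from Phi_inj[OF st b0 b1 this] have "(\<lambda>l. Mi$l$j) = (\<lambda>l. 0)" .
    then have "Phi P \<beta> S (\<lambda>l. Mi$l$j) j = 0" by (simp add: Phi_0)
    with cM[of j j] show False by simp
  qed
  have c1: "(\<lambda>l. Mi'$l$k) = (\<lambda>l. 1 * Mi$l$k + (- (A$j$k / a)) * Mi$l$j)" if kS: "k \<in> S" for k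
  proof (rule Phi_inj[OF st b0 b1])
    fix i
    have kj: "k \<noteq> j" using kS jS by auto
    have Ajk: "A$j$k = Phi P \<beta> (insert j S) (\<lambda>l. Mi$l$k) j" unfolding Ae PhiNj ..
    show "Phi P \<beta> (insert j S) (\<lambda>l. Mi'$l$k) i = Phi P \<beta> (insert j S) (\<lambda>l. 1 * Mi$l$k + (- (A$j$k / a)) * Mi$l$j) i"
      unfolding Phi_lin cM'
      using cM[of k i] cM[of j i] a0 kj Ajk ajj
      by (cases "i = j") (simp_all add: Phi_ins)
  qed
  have c2: "(\<lambda>l. Mi'$l$j) = (\<lambda>l. (1/a) * Mi$l$j)"
  proof (rule Phi_inj[OF st b0 b1])
    fix i
    show "Phi P \<beta> (insert j S) (\<lambda>l. Mi'$l$j) i = Phi P \<beta> (insert j S) (\<lambda>l. (1/a) * Mi$l$j) i"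
      unfolding Phi_scale cM'
      using cM[of j i] a0 ajj
      by (cases "i = j") (simp_all add: Phi_ins)
  qed
  have partA1: "\<forall>i\<in>T. \<forall>k\<in>S. A' $ i $ k = A $ i $ k - A $ i $ j * A $ j $ k / A $ j $ j"
  proof (intro ballI)
    fix i k assume iT: "i \<in> T" and kS: "k \<in> S"
    have "A'$i$k = Phi P \<beta> (-S) (\<lambda>l. 1 * Mi$l$k + (- (A$j$k / a)) * Mi$l$j) i"
      unfolding Ae' PhiT[OF iT] c1[OF kS] ..
    also have "\<dots> = A$i$k - A$i$j * A$j$k / A$j$j"
      unfolding Phi_lin Ae[symmetric] a_def by simp
    finally show "A' $ i $ k = A $ i $ k - A $ i $ j * A $ j $ k / A $ j $ j" .
  qed
  have partA2: "\<forall>i\<in>T. A' $ i $ j = A $ i $ j / A $ j $ j"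
  proof
    fix i assume iT: "i \<in> T"
    have "A'$i$j = Phi P \<beta> (-S) (\<lambda>l. (1/a) * Mi$l$j) i"
      unfolding Ae' PhiT[OF iT] c2 ..
    also have "\<dots> = A$i$j / A$j$j"
      unfolding Phi_scale Ae[symmetric] a_def by simp
    finally show "A' $ i $ j = A $ i $ j / A $ j $ j" .
  qed
  have Mjj: "Mi$j$j = 1/(1-\<beta>)"
    using cM[of j j] jS b1 by (simp add: Phi_def field_simps)
  have MiT: "\<And>i. i \<in> T \<Longrightarrow> Mi$i$j = 0"
    using cM[of j] b1 unfolding T_def by (auto simp: Phi_def) (metis mult_eq_0_iff diff_gt_0_iff_gt less_irrefl)
  have AS_ent: "\<And>i. i \<in> S \<Longrightarrow> A$i$j = (1-\<beta>) * Mi$i$j"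
    by (simp add: Ae Phi_def)
  have AT_ent: "\<And>i. i \<in> T \<Longrightarrow> A$i$j = - \<beta> * (\<Sum>l\<in>UNIV. P$i$l * Mi$l$j)"
    using MiT unfolding T_def by (simp add: Ae Phi_def)
  have rpart: "(\<forall>i\<in>S. rS P \<beta> R0 (insert j S) i = rS P \<beta> R0 S i + rS P \<beta> R0 S j / A $ j $ j * A $ i $ j)
    \<and> rS P \<beta> R0 (insert j S) j = rS P \<beta> R0 S j / A $ j $ j
    \<and> (\<forall>i\<in>T. rS P \<beta> R0 (insert j S) i = rS P \<beta> R0 S i - rS P \<beta> R0 S j / A $ j $ j * A $ i $ j)" for R0
  proof -
    define f where "f = fS P \<beta> R0 S"
    define f' where "f' = fS P \<beta> R0 (insert j S)"
    define rj where "rj = rS P \<beta> R0 S j"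
    have ffix: "\<And>i. f i = (if i \<in> S then R0 i + \<beta> * (\<Sum>k\<in>UNIV. P$i$k * f k) else 0)"
      unfolding f_def by (rule fS_fix[OF st b0 b1])
    have ffix': "\<And>i. f' i = (if i \<in> insert j S then R0 i + \<beta> * (\<Sum>k\<in>UNIV. P$i$k * f' k) else 0)"
      unfolding f'_def by (rule fS_fix[OF st b0 b1])
    have fj: "f j = 0" using ffix[of j] jS by simp
    have rj: "rj = R0 j + \<beta> * (\<Sum>k\<in>UNIV. P$j$k * f k)"
      unfolding rj_def rS_def f_def[symmetric] using fj by simp
    have ff: "f' = (\<lambda>l. 1 * f l + (rj/a) * Mi$l$j)"
    proof (rule Phi_inj[OF st b0 b1])
      fix i
      have L: "Phi P \<beta> (insert j S) f' i = (if i \<in> insert j S then R0 i else 0)"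
        unfolding f'_def by (rule fPhi[OF st b0 b1])
      have F: "Phi P \<beta> S f i = (if i \<in> S then R0 i else 0)"
        unfolding f_def by (rule fPhi[OF st b0 b1])
      have Fj: "Phi P \<beta> (insert j S) f j = - \<beta> * (\<Sum>k\<in>UNIV. P$j$k * f k)"
        using fj by (simp add: Phi_def)
      show "Phi P \<beta> (insert j S) f' i = Phi P \<beta> (insert j S) (\<lambda>l. 1 * f l + (rj/a) * Mi$l$j) i"
        unfolding Phi_lin L
        using F Fj cM[of j i] a0 ajj rj
        by (cases "i = j") (simp_all add: Phi_ins)
    qed
    have f'e: "\<And>l. f' l = f l + (rj/a) * Mi$l$j" using ff by (simp add: fun_eq_iff)
    have rS1: "\<forall>i\<in>S. rS P \<beta> R0 (insert j S) i = rS P \<beta> R0 S i + rj / A $ j $ j * A $ i $ j"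
    proof
      fix i assume iS: "i \<in> S"
      have X: "rS P \<beta> R0 (insert j S) i = (1-\<beta>) * f' i"
        unfolding rS_def f'_def[symmetric] using ffix'[of i] iS by (simp add: algebra_simps)
      have Y: "rS P \<beta> R0 S i = (1-\<beta>) * f i"
        unfolding rS_def f_def[symmetric] using ffix[of i] iS by (simp add: algebra_simps)
      show "rS P \<beta> R0 (insert j S) i = rS P \<beta> R0 S i + rj / A $ j $ j * A $ i $ j"
        unfolding X Y f'e AS_ent[OF iS] a_def by (simp add: algebra_simps add_divide_distrib[symmetric])
    qed
    have rS2: "rS P \<beta> R0 (insert j S) j = rj / A $ j $ j"
    proof -
      have "rS P \<beta> R0 (insert j S) j = (1-\<beta>) * f' j"
        unfolding rS_def f'_def[symmetric] using ffix'[of j] by (simp add: algebra_simps)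
      then show ?thesis using f'e[of j] fj Mjj b1 unfolding a_def by simp
    qed
    have rS3: "\<forall>i\<in>T. rS P \<beta> R0 (insert j S) i = rS P \<beta> R0 S i - rj / A $ j $ j * A $ i $ j"
    proof
      fix i assume iT: "i \<in> T"
      have f'i: "f' i = 0" using ffix'[of i] iT unfolding T_def by simp
      have fi: "f i = 0" using ffix[of i] iT unfolding T_def by simp
      have "rS P \<beta> R0 (insert j S) i = R0 i + \<beta> * (\<Sum>k\<in>UNIV. P$i$k * f' k)"
        unfolding rS_def f'_def[symmetric] using f'i by simp
      also have "\<dots> = R0 i + \<beta> * (\<Sum>k\<in>UNIV. P$i$k * f k) + (rj/a) * (\<beta> * (\<Sum>k\<in>UNIV. P$i$k * Mi$k$j))"
        unfolding f'e by (simp add: algebra_simps sum.distrib sum_distrib_left)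
      also have "\<dots> = rS P \<beta> R0 S i - rj / A $ j $ j * A $ i $ j"
        unfolding rS_def f_def[symmetric] AT_ent[OF iT] a_def using fi by simp
      finally show "rS P \<beta> R0 (insert j S) i = rS P \<beta> R0 S i - rj / A $ j $ j * A $ i $ j" .
    qed
    show ?thesis using rS1 rS2 rS3 unfolding rj_def by blast
  qed
  have wr: "\<And>S i. wS P \<beta> S i = rS P \<beta> (\<lambda>_. 1) S i"
    by (simp add: wS_def rS_def gS_def)
  show ?thesis
    using a0 partA1 partA2 rpart[of R] rpart[of "\<lambda>_. 1"] unfolding a_def wr by blast
qed

end
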